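(* Let $\mathcal{K}=(\Sigma,\to,\ell)$ be a Kripke structure over a set $AP$ of atoms and let $R\in\mathrm{PreOrd}(\Sigma)$. Then $R$ is a simulation on $\mathcal{K}$ if and only if $\mathrm{add}(R)$ is forward complete for $\{\mathbf{p}\mid p\in AP\}\cup\{\widetilde{\mathrm{pre}}_\to\}$.
   Context: A Kripke structure has a total transition relation $\to\subseteq\Sigma\times\Sigma$ and labeling $\ell:\Sigma\to\wp(AP)$; $\mathbf{p}=\{s\mid p\in\ell(s)\}$. $\widetilde{\mathrm{pre}}_\to(Y)=\{a\in\Sigma\mid\forall b\in\Sigma.\,(a\to b\Rightarrow b\in Y)\}$. $\mathrm{PreOrd}(\Sigma)$ is the set of reflexive transitive relations on $\Sigma$. A relation $R\subseteq\Sigma\times\Sigma$ is a simulation if whenever $sRs'$: $\ell(s')\subseteq\ell(s)$, and for every $t$ with $s\to t$ there is $t'$ with $s'\to t'$ and $tRt'$. For $R\in\mathrm{PreOrd}(\Sigma)$, $\mathrm{add}(R)$ is the abstract domain of $\wp(\Sigma)$ whose associated upper closure operator is $\mathrm{pre}_R(S)=\{x\in\Sigma\mid\exists y\in S.\,xRy\}$. A closure $\mu$ is forward complete for a constant $k\subseteq\Sigma$ if $\mu(k)=k$, and for a unary $f$ if $f(\mu(X))=\mu(f(\mu(X)))$ for all $X\subseteq\Sigma$. *)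

theory Defs
  imports Main
begin

text \<open>Kripke structure: states of type 's (\<Sigma> = UNIV), atoms of type 'ap (AP = UNIV),
  transition relation T, labeling L.\<close>

definition total_rel :: "('s \<times> 's) set \<Rightarrow> bool" where
  "total_rel T \<longleftrightarrow> (\<forall>s. \<exists>t. (s, t) \<in> T)"

definition atom_set :: "('s \<Rightarrow> 'ap set) \<Rightarrow> 'ap \<Rightarrow> 's set" where
  "atom_set L p = {s. p \<in> L s}"

definition pre_tilde :: "('s \<times> 's) set \<Rightarrow> 's set \<Rightarrow> 's set" where
  "pre_tilde T Y = {a. \<forall>b. (a, b) \<in> T \<longrightarrow> b \<in> Y}"

definition preord :: "('s \<times> 's) set \<Rightarrow> bool" where
  "preord R \<longleftrightarrow> refl R \<and> trans R"

definition simulation :: "('s \<times> 's) set \<Rightarrow> ('s \<Rightarrow> 'ap set) \<Rightarrow> ('s \<times> 's) set \<Rightarrow> bool" where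
  "simulation T L R \<longleftrightarrow> (\<forall>s s'. (s, s') \<in> R \<longrightarrow>
      L s' \<subseteq> L s \<and> (\<forall>t. (s, t) \<in> T \<longrightarrow> (\<exists>t'. (s', t') \<in> T \<and> (t, t') \<in> R)))"

text \<open>Upper closure operator associated with add(R).\<close>
definition pre_R :: "('s \<times> 's) set \<Rightarrow> 's set \<Rightarrow> 's set" where
  "pre_R R S = {x. \<exists>y\<in>S. (x, y) \<in> R}"

definition fc_const :: "('s set \<Rightarrow> 's set) \<Rightarrow> 's set \<Rightarrow> bool" where
  "fc_const \<mu> k \<longleftrightarrow> \<mu> k = k"

definition fc_unary :: "('s set \<Rightarrow> 's set) \<Rightarrow> ('s set \<Rightarrow> 's set) \<Rightarrow> bool" where
  "fc_unary \<mu> f \<longleftrightarrow> (\<forall>X. f (\<mu> X) = \<mu> (f (\<mu> X)))"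

end

theory Submission
  imports Defs
begin

theorem theorem7p8:
  fixes T :: "('s \<times> 's) set" and L :: "'s \<Rightarrow> 'ap set" and R :: "('s \<times> 's) set"
  assumes "total_rel T"
    and "preord R"
  shows "simulation T L R \<longleftrightarrow>
           ((\<forall>p. fc_const (pre_R R) (atom_set L p)) \<and> fc_unary (pre_R R) (pre_tilde T))"
proof -
  have rf: "\<And>x. (x, x) \<in> R" using assms(2) unfolding preord_def refl_on_def by blast
  have tr: "\<And>x y z. (x, y) \<in> R \<Longrightarrow> (y, z) \<in> R \<Longrightarrow> (x, z) \<in> R"
    using assms(2) unfolding preord_def trans_def by blast
  show ?thesis
  proof
    assume S: "simulation T L R"
    have "fc_const (pre_R R) (atom_set L p)" for p
      unfolding fc_const_def pre_R_def atom_set_def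
      using S rf unfolding simulation_def by blast
    moreover have "fc_unary (pre_R R) (pre_tilde T)"
      unfolding fc_unary_def
    proof
      fix X
      show "pre_tilde T (pre_R R X) = pre_R R (pre_tilde T (pre_R R X))"
      proof
        show "pre_tilde T (pre_R R X) \<subseteq> pre_R R (pre_tilde T (pre_R R X))"
          unfolding pre_R_def using rf by blast
      next
        show "pre_R R (pre_tilde T (pre_R R X)) \<subseteq> pre_tilde T (pre_R R X)"
        proof
          fix s assume "s \<in> pre_R R (pre_tilde T (pre_R R X))"
          then obtain s' where ss: "(s, s') \<in> R" and s': "s' \<in> pre_tilde T (pre_R R X)"
            unfolding pre_R_def by blast
          show "s \<in> pre_tilde T (pre_R R X)"
            unfolding pre_tilde_def
          proof (intro CollectI allI impI)
            fix t assume "(s, t) \<in> T"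
            then obtain t' where "(s', t') \<in> T" "(t, t') \<in> R"
              using S ss unfolding simulation_def by blast
            then have "t' \<in> pre_R R X" using s' unfolding pre_tilde_def by blast
            then obtain y where "y \<in> X" "(t', y) \<in> R" unfolding pre_R_def by blast
            then show "t \<in> pre_R R X" using tr[OF \<open>(t, t') \<in> R\<close>] unfolding pre_R_def by blast
          qed
        qed
      qed
    qed
    ultimately show "(\<forall>p. fc_const (pre_R R) (atom_set L p)) \<and> fc_unary (pre_R R) (pre_tilde T)"
      by blast
  next
    assume A: "(\<forall>p. fc_const (pre_R R) (atom_set L p)) \<and> fc_unary (pre_R R) (pre_tilde T)"
    show "simulation T L R" unfolding simulation_def
    proof (intro allI impI conjI)
      fix s s' assume ss: "(s, s') \<in> R"
      show "L s' \<subseteq> L s"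
      proof
        fix p assume "p \<in> L s'"
        then have "s \<in> pre_R R (atom_set L p)" using ss unfolding pre_R_def atom_set_def by blast
        then show "p \<in> L s" using A unfolding fc_const_def atom_set_def by blast
      qed
      fix t assume st: "(s, t) \<in> T"
      define X where "X = {y. (s', y) \<in> T}"
      have "s' \<in> pre_tilde T (pre_R R X)"
        unfolding pre_tilde_def pre_R_def X_def using rf by blast
      then have "s \<in> pre_R R (pre_tilde T (pre_R R X))" using ss unfolding pre_R_def by blast
      then have "s \<in> pre_tilde T (pre_R R X)" using A unfolding fc_unary_def by metis
      then have "t \<in> pre_R R X" using st unfolding pre_tilde_def by blast
      then show "\<exists>t'. (s', t') \<in> T \<and> (t, t') \<in> R" unfolding pre_R_def X_def by blast
    qed
  qed
qed

end
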